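(* Let $f:\mathbb{T}^2\to\mathbb{T}^2$ be an area preserving non-invertible endomorphism and suppose $U\subset\mathbb{T}^2$ is a regular open set with $f^{-1}(U)=U$. If $U_0$ is a connected component of $U$, then there exists $n\ge1$ such that $f^{-n}(U_0)=U_0$.
   Context: An endomorphism is a local homeomorphism (covering map) $f:\mathbb{T}^2\to\mathbb{T}^2$, $\mathbb{T}^2=\mathbb{R}^2/\mathbb{Z}^2$ with Haar measure $\lambda$; area preserving means $\lambda(f^{-1}(B))=\lambda(B)$ for all Borel $B$; non-invertible means degree at least two. An open set is regular if it equals the interior of its closure. *)

theory Defs
  imports "HOL-Analysis.Analysis"
begin

text \<open>The 2-torus R^2/Z^2, represented by the fundamental domain [0,1)^2,
  with the quotient topology induced by the projection tproj.\<close>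

typedef torus = "{x::real \<times> real. 0 \<le> fst x \<and> fst x < 1 \<and> 0 \<le> snd x \<and> snd x < 1}"
  by (rule exI[of _ "(0,0)"]) auto

definition tproj :: "real \<times> real \<Rightarrow> torus" where
  "tproj x = Abs_torus (frac (fst x), frac (snd x))"

instantiation torus :: topological_space
begin
definition open_torus :: "torus set \<Rightarrow> bool" where
  "open_torus S \<longleftrightarrow> open (tproj -` S)"
instance
proof
  show "open (UNIV :: torus set)" by (simp add: open_torus_def)
next
  fix S T :: "torus set"
  assume "open S" "open T"
  then show "open (S \<inter> T)" by (simp add: open_torus_def open_Int vimage_Int)
next
  fix K :: "torus set set"
  assume "\<forall>S\<in>K. open S"
  then show "open (\<Union>K)" by (auto simp: open_torus_def vimage_Union intro!: open_UN)
qed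
end

definition haar :: "torus measure" where
  "haar = distr (restrict_space lborel
           {x::real \<times> real. 0 \<le> fst x \<and> fst x < 1 \<and> 0 \<le> snd x \<and> snd x < 1}) borel tproj"

definition area_preserving :: "(torus \<Rightarrow> torus) \<Rightarrow> bool" where
  "area_preserving f \<longleftrightarrow> (\<forall>B \<in> sets borel. emeasure haar (f -` B) = emeasure haar B)"

definition endomorphism :: "(torus \<Rightarrow> torus) \<Rightarrow> bool" where
  "endomorphism f \<longleftrightarrow> covering_space UNIV f UNIV"

definition regular_open :: "'a::topological_space set \<Rightarrow> bool" where
  "regular_open U \<longleftrightarrow> U = interior (closure U)"

end

theory Submission imports Defs begin

abbreviation "DD \<equiv> {x::real \<times> real. 0 \<le> fst x \<and> fst x < 1 \<and> 0 \<le> snd x \<and> snd x < 1}"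

lemma frac_in_D: "(frac a, frac b) \<in> DD"
  by (simp add: frac_lt_1)

lemma tproj_eq_iff:
  "tproj a = tproj b \<longleftrightarrow> (\<exists>m n::int. a = b + (of_int m, of_int n))"
proof
  assume "tproj a = tproj b"
  then have "(frac (fst a), frac (snd a)) = (frac (fst b), frac (snd b))"
    unfolding tproj_def using Abs_torus_inject[OF frac_in_D frac_in_D] by blast
  then have "frac (fst a) = frac (fst b)" "frac (snd a) = frac (snd b)" by auto
  then obtain m n where "fst a = fst b + of_int m" "snd a = snd b + of_int n"
    by (metis frac_eqE)
  then show "\<exists>m n::int. a = b + (of_int m, of_int n)"
    by (intro exI[of _ m] exI[of _ n]) (simp add: prod_eq_iff)
next
  assume "\<exists>m n::int. a = b + (of_int m, of_int n)"
  then show "tproj a = tproj b" unfolding tproj_def by auto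
qed

lemma tproj_frac: "tproj (frac (fst a), frac (snd a)) = tproj a"
  unfolding tproj_def by (simp add: frac_frac)

lemma continuous_tproj: "continuous_on UNIV tproj"
  by (simp add: continuous_on_open_vimage open_torus_def)

lemma open_tproj_image:
  assumes "open B"
  shows "open (tproj ` B)"
proof -
  have "tproj -` (tproj ` B) = (\<Union>m::int. \<Union>n::int. (\<lambda>x. (of_int m, of_int n) + x) ` B)"
  proof (rule set_eqI, rule iffI)
    fix z assume "z \<in> tproj -` (tproj ` B)"
    then obtain w where "w \<in> B" "tproj z = tproj w" by auto
    then obtain m n where "z = w + (of_int m, of_int n)" using tproj_eq_iff by blast
    then show "z \<in> (\<Union>m::int. \<Union>n::int. (\<lambda>x. (of_int m, of_int n) + x) ` B)"
      using \<open>w \<in> B\<close> by (auto simp: add.commute)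
  next
    fix z assume "z \<in> (\<Union>m::int. \<Union>n::int. (\<lambda>x. (of_int m, of_int n) + x) ` B)"
    then obtain m n :: int and w where "w \<in> B" "z = (of_int m, of_int n) + w" by auto
    moreover have "tproj ((of_int m, of_int n) + w) = tproj w" unfolding tproj_def by simp
    ultimately show "z \<in> tproj -` tproj ` B" by (metis imageI vimageI)
  qed
  moreover have "open (\<Union>m::int. \<Union>n::int. (\<lambda>x. (of_int m, of_int n) + x) ` B)"
    using assms by (intro open_UN ballI open_translation) auto
  ultimately show ?thesis by (simp add: open_torus_def)
qed

lemma tproj_surj: "\<exists>a. tproj a = t"
proof -
  obtain p where p: "t = Abs_torus p" "p \<in> DD" by (rule Abs_torus_cases)
  have "tproj p = Abs_torus p" using p(2) unfolding tproj_def
    by (simp add: frac_eq)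
  then show ?thesis using p by blast
qed

lemma DD_borel: "DD \<in> sets borel"
proof -
  have "DD = ({x. fst x \<ge> 0} \<inter> {x. snd x \<ge> 0}) \<inter> (- {x. fst x \<ge> 1} \<inter> - {x. snd x \<ge> 1})"
    by auto
  moreover have "closed {x::real\<times>real. fst x \<ge> 0}" "closed {x::real\<times>real. snd x \<ge> 0}"
    "closed {x::real\<times>real. fst x \<ge> 1}" "closed {x::real\<times>real. snd x \<ge> 1}"
    by (intro closed_Collect_le continuous_intros)+
  ultimately show ?thesis by (simp only:) (intro sets.Int borel_comp borel_closed)
qed

lemma tproj_meas: "tproj \<in> measurable (restrict_space lborel DD) borel"
  by (rule measurable_restrict_space1) (simp add: borel_measurable_continuous_onI continuous_tproj)

lemma sets_haar[simp]: "sets haar = sets borel"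
  by (simp add: haar_def)

lemma space_haar[simp]: "space haar = UNIV"
  by (simp add: haar_def)

lemma emeasure_haar:
  assumes "A \<in> sets borel"
  shows "emeasure haar A = emeasure lborel (tproj -` A \<inter> DD)"
  unfolding haar_def
  apply (subst emeasure_distr[OF tproj_meas assms])
  apply (subst emeasure_restrict_space)
  using DD_borel by auto

lemma finite_measure_haar: "finite_measure haar"
proof
  have "bounded DD"
    by (rule bounded_subset[OF bounded_cbox[of "(0,0)" "(1,1)"]]) (auto simp: cbox_Pair_eq)
  then have "emeasure lborel DD < \<infinity>"
    by (rule emeasure_bounded_finite)
  then show "emeasure haar (space haar) \<noteq> \<infinity>"
    by (simp add: emeasure_haar)
qed

lemma haar_pos:
  assumes "open T" "T \<noteq> {}"
  shows "0 < emeasure haar T"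
proof -
  obtain t where "t \<in> T" using assms by auto
  obtain a where a: "tproj a = t" using tproj_surj by blast
  define y where "y = (frac (fst a), frac (snd a))"
  have y: "tproj y = t" "y \<in> DD" using a tproj_frac by (auto simp: y_def frac_lt_1)
  have "open (tproj -` T)" using assms open_torus_def by blast
  moreover have "y \<in> tproj -` T" using y \<open>t \<in> T\<close> by auto
  ultimately obtain r where r: "r > 0" "ball y r \<subseteq> tproj -` T"
    using open_contains_ball by blast
  obtain y1 y2 where yy: "y = (y1, y2)" by fastforce
  define s where "s = min (r/2) (min (1 - y1) (1 - y2))"
  have s: "s > 0" using r y by (auto simp: s_def yy)
  let ?S = "{y1<..<y1+s} \<times> {y2<..<y2+s}"
  have sub: "?S \<subseteq> tproj -` T \<inter> DD"
  proof
    fix z assume z: "z \<in> ?S"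
    obtain z1 z2 where zz: "z = (z1, z2)" by fastforce
    have zi: "y1 < z1" "z1 < y1 + s" "y2 < z2" "z2 < y2 + s"
      using z by (auto simp: zz)
    have "dist y z \<le> norm (z1 - y1) + norm (z2 - y2)"
    proof -
      have "dist y z = norm ((z1, z2) - (y1, y2))"
        unfolding yy zz dist_commute[of "(y1,y2)"] dist_norm by (rule norm_minus_commute)
      also have "\<dots> = norm (z1 - y1, z2 - y2)" by simp
      finally show ?thesis using norm_Pair_le[of "z1 - y1" "z2 - y2"] by simp
    qed
    also have "\<dots> < r" using zi unfolding real_norm_def
    proof -
      have "s \<le> r/2" unfolding s_def by (rule min.cobounded1)
      then show "\<bar>z1 - y1\<bar> + \<bar>z2 - y2\<bar> < r" using zi by linarith
    qed
    finally have "z \<in> ball y r" by simp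
    moreover have "s \<le> 1 - y1" "s \<le> 1 - y2" by (simp_all add: s_def min_def)
    then have "z \<in> DD" using zi y by (auto simp: yy zz)
    ultimately show "z \<in> tproj -` T \<inter> DD" using r by auto
  qed
  have "emeasure lborel ?S = emeasure lborel {y1<..<y1+s} * emeasure lborel {y2<..<y2+s}"
    by (subst lborel_prod[symmetric]) (simp add: lborel.emeasure_pair_measure_Times)
  also have "\<dots> = ennreal s * ennreal s" using s by simp
  finally have "0 < emeasure lborel ?S" using s
    by (simp add: ennreal_mult'[symmetric])
  also have "\<dots> \<le> emeasure lborel (tproj -` T \<inter> DD)"
    by (rule emeasure_mono[OF sub]) (use assms DD_borel open_torus_def in auto)
  also have "\<dots> = emeasure haar T"
    using assms by (simp add: emeasure_haar)
  finally show ?thesis .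
qed

lemma components_open_torus:
  fixes U :: "torus set"
  assumes "open U" "C \<in> components U"
  shows "open C"
proof (subst open_subopen, intro ballI)
  fix z assume "z \<in> C"
  have CU: "C \<subseteq> U" using assms in_components_subset by blast
  obtain x where x: "x \<in> U" "C = connected_component_set U x"
    using assms(2) by (auto simp: components_def)
  have Cz: "C = connected_component_set U z"
    using x \<open>z \<in> C\<close> connected_component_eq by blast
  obtain a where a: "tproj a = z" using tproj_surj by blast
  have "open (tproj -` U)" using assms open_torus_def by blast
  moreover have "a \<in> tproj -` U" using a \<open>z \<in> C\<close> CU by auto
  ultimately obtain r where r: "r > 0" "ball a r \<subseteq> tproj -` U"
    using open_contains_ball by blast
  let ?T = "tproj ` ball a r"
  have "open ?T" by (rule open_tproj_image) simp
  moreover have "z \<in> ?T" using a r by auto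
  moreover have "connected ?T"
    by (rule connected_continuous_image[OF continuous_on_subset[OF continuous_tproj]]) auto
  moreover have "?T \<subseteq> U" using r by auto
  ultimately show "\<exists>T. open T \<and> z \<in> T \<and> T \<subseteq> C"
    using Cz connected_component_maximal by metis
qed

theorem lemma5:
  fixes f :: "torus \<Rightarrow> torus" and U U0 :: "torus set"
  assumes "endomorphism f"
    and "area_preserving f"
    and "\<not> inj f"
    and "regular_open U"
    and "f -` U = U"
    and "U0 \<in> components U"
  shows "\<exists>n::nat. n \<ge> 1 \<and> (f ^^ n) -` U0 = U0"
proof -
  have contf: "continuous_on UNIV f"
    using assms(1) covering_space_imp_continuous endomorphism_def by blast
  have fopen: "open (f -` B)" if "open B" for B
    using contf that by (simp add: continuous_on_open_vimage)
  have Uopen: "open U" using assms(4) unfolding regular_open_def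
    by (metis open_interior)
  interpret M: finite_measure haar by (rule finite_measure_haar)
  define \<mu> where "\<mu> = measure haar"
  have sets: "B \<in> sets haar" if "open B" for B using that by simp
  have pres: "\<mu> (f -` B) = \<mu> B" if "open B" for B
    using assms(2) that unfolding area_preserving_def \<mu>_def measure_def by simp
  have pos: "\<mu> B > 0" if "open B" "B \<noteq> {}" for B
    using haar_pos[OF that] M.emeasure_eq_measure[of B] unfolding \<mu>_def by simp
  have add: "\<mu> (A \<union> B) = \<mu> A + \<mu> B" if "open A" "open B" "A \<inter> B = {}" for A B
    using M.finite_measure_Union[OF sets[OF that(1)] sets[OF that(2)] that(3)] unfolding \<mu>_def .
  have mono: "\<mu> A \<le> \<mu> B" if "open B" "A \<subseteq> B" for A B
    using M.finite_measure_mono[OF that(2) sets[OF that(1)]] unfolding \<mu>_def .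
  have copen: "open C" if "C \<in> components U" for C
    using components_open_torus[OF Uopen that] .
  define g where "g W = connected_component_set U (f (SOME x. x \<in> W))" for W
  have gprop: "g W \<in> components U \<and> W \<subseteq> f -` g W" if W: "W \<in> components U" for W
  proof -
    have "W \<noteq> {}" using W in_components_nonempty by blast
    then have x0: "(SOME x. x \<in> W) \<in> W" by (metis ex_in_conv someI_ex)
    have WU: "W \<subseteq> U" using W in_components_subset by blast
    have fx0: "f (SOME x. x \<in> W) \<in> U" using x0 WU assms(5) by blast
    have "g W \<in> components U" unfolding g_def by (rule componentsI[OF fx0])
    moreover have "f ` W \<subseteq> g W" unfolding g_def
    proof (rule connected_component_maximal)
      show "f (SOME x. x \<in> W) \<in> f ` W" using x0 by blast
      show "connected (f ` W)"
        using W in_components_connected connected_continuous_image continuous_on_subset[OF contf]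
        by blast
      show "f ` W \<subseteq> U" using WU assms(5) by blast
    qed
    ultimately show ?thesis by blast
  qed
  define Wn where "Wn n = (g ^^ n) U0" for n
  have WnS: "Wn (Suc n) = g (Wn n)" for n by (simp add: Wn_def)
  have Wc: "Wn n \<in> components U" for n
    by (induction n) (auto simp: Wn_def assms(6) gprop)
  have Wopen: "open (Wn n)" for n using copen[OF Wc] .
  have Wne: "Wn n \<noteq> {}" for n using Wc in_components_nonempty by blast
  have Wsub: "Wn n \<subseteq> f -` Wn (Suc n)" for n using gprop[OF Wc] WnS by simp
  have step: "\<mu> (Wn n) \<le> \<mu> (Wn (Suc n))" for n
    using mono[OF fopen[OF Wopen] Wsub] pres[OF Wopen] by simp
  have incr: "\<mu> (Wn m) \<le> \<mu> (Wn n)" if "m \<le> n" for m n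
    using lift_Suc_mono_le[of "\<lambda>n. \<mu> (Wn n)", OF step that] .
  have W0: "Wn 0 = U0" by (simp add: Wn_def)
  have c: "\<mu> U0 > 0" using pos[OF Wopen Wne, of 0] W0 by simp
  have "\<exists>i j. i < j \<and> Wn i = Wn j"
  proof (rule ccontr)
    assume nt: "\<not> ?thesis"
    have dist: "Wn i \<inter> Wn j = {}" if "i \<noteq> j" for i j
    proof -
      have "Wn i \<noteq> Wn j"
      proof (cases "i < j")
        case True then show ?thesis using nt by blast
      next
        case False then have "j < i" using that by simp
        then show ?thesis using nt by blast
      qed
      then show ?thesis using components_nonoverlap[OF Wc Wc] by blast
    qed
    have "real N * \<mu> U0 \<le> \<mu> (\<Union>n<N. Wn n)" for N
    proof (induction N)
      case 0 then show ?case by (simp add: \<mu>_def)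
    next
      case (Suc N)
      have "(\<Union>n<Suc N. Wn n) = (\<Union>n<N. Wn n) \<union> Wn N" by (auto simp: lessThan_Suc)
      moreover have "(\<Union>n<N. Wn n) \<inter> Wn N = {}"
      proof -
        have "Wn n \<inter> Wn N = {}" if "n < N" for n using dist that by simp
        then show ?thesis by blast
      qed
      moreover have "open (\<Union>n<N. Wn n)" by (rule open_UN) (simp add: Wopen)
      ultimately have "\<mu> (\<Union>n<Suc N. Wn n) = \<mu> (\<Union>n<N. Wn n) + \<mu> (Wn N)"
        using add[of "\<Union>n<N. Wn n" "Wn N"] Wopen by simp
      moreover have "\<mu> U0 \<le> \<mu> (Wn N)" using incr[of 0 N] W0 by simp
      ultimately show ?case using Suc by (simp add: distrib_right)
    qed
    moreover have "\<mu> (\<Union>n<N. Wn n) \<le> \<mu> UNIV" for N by (rule mono) auto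
    moreover obtain N where "\<mu> UNIV / \<mu> U0 < real N" using reals_Archimedean2 by blast
    then have "\<mu> UNIV < real N * \<mu> U0" using c by (simp add: pos_divide_less_eq)
    ultimately show False by (meson leD order_trans)
  qed
  then obtain i0 j0 where ij0: "i0 < j0" "Wn i0 = Wn j0" by blast
  define P where "P i = (\<exists>j>i. Wn j = Wn i)" for i
  have Pi0: "P i0" using ij0 unfolding P_def by metis
  define i where "i = (LEAST i. P i)"
  have "P i" unfolding i_def by (rule LeastI[of P, OF Pi0])
  then have i: "\<exists>j>i. Wn j = Wn i" unfolding P_def .
  have imin: "\<not> (\<exists>j>k. Wn j = Wn k)" if "k < i" for k
    using not_less_Least[of k P] that unfolding i_def P_def by blast
  obtain j where j: "j > i" "Wn j = Wn i" using i by blast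
  have "i = 0"
  proof (rule ccontr)
    assume "i \<noteq> 0"
    then obtain i' where i': "i = Suc i'" by (metis not0_implies_Suc)
    obtain j' where j': "j = Suc j'" using j by (metis Suc_pred' gr_implies_not0 not_gr0)
    have "Wn i' = Wn j'"
    proof (rule ccontr)
      assume ne: "Wn i' \<noteq> Wn j'"
      then have "Wn i' \<inter> Wn j' = {}" using components_nonoverlap[OF Wc Wc] by blast
      then have "\<mu> (Wn i' \<union> Wn j') = \<mu> (Wn i') + \<mu> (Wn j')" by (rule add[OF Wopen Wopen])
      moreover have "Wn i' \<union> Wn j' \<subseteq> f -` Wn i" using Wsub[of i'] Wsub[of j'] i' j' j by auto
      then have "\<mu> (Wn i' \<union> Wn j') \<le> \<mu> (Wn i)"
        using mono[OF fopen[OF Wopen[of i]]] pres[OF Wopen[of i]] by simp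
      moreover have "\<mu> (Wn i) \<le> \<mu> (Wn j')" using incr j i' j' by simp
      moreover have "\<mu> (Wn i') > 0" using pos[OF Wopen Wne] .
      ultimately show False by linarith
    qed
    then show False using imin[of i'] i' j j' by auto
  qed
  define p where "p = j"
  have p: "p \<ge> 1" "Wn p = U0" using j \<open>i = 0\<close> W0 by (auto simp: p_def)
  have eqm: "\<mu> (Wn k) = \<mu> (Wn (Suc k))" if "k < p" for k
    using step[of k] incr[of "Suc k" p] incr[of 0 k] p W0 that by simp
  have uniq: "f -` Wn (Suc k) = Wn k" if "k < p" for k
  proof
    show "Wn k \<subseteq> f -` Wn (Suc k)" by (rule Wsub)
    show "f -` Wn (Suc k) \<subseteq> Wn k"
    proof
      fix x assume x: "x \<in> f -` Wn (Suc k)"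
      have "x \<in> U" using x in_components_subset[OF Wc] assms(5) by blast
      define W' where "W' = connected_component_set U x"
      have W'c: "W' \<in> components U" unfolding W'_def by (rule componentsI) fact
      have xW': "x \<in> W'" using \<open>x \<in> U\<close> by (simp add: W'_def)
      have "f x \<in> g W'" using gprop[OF W'c] xW' by blast
      moreover have "f x \<in> Wn (Suc k)" using x by simp
      ultimately have gW': "g W' = Wn (Suc k)"
        using components_nonoverlap[OF gprop[OF W'c, THEN conjunct1] Wc] by blast
      have "W' = Wn k"
      proof (rule ccontr)
        assume ne: "W' \<noteq> Wn k"
        then have "W' \<inter> Wn k = {}" using components_nonoverlap[OF W'c Wc] by blast
        then have "\<mu> (W' \<union> Wn k) = \<mu> W' + \<mu> (Wn k)" by (rule add[OF copen[OF W'c] Wopen])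
        moreover have "W' \<union> Wn k \<subseteq> f -` Wn (Suc k)" using gprop[OF W'c] gW' Wsub[of k] by auto
        then have "\<mu> (W' \<union> Wn k) \<le> \<mu> (Wn (Suc k))"
          using mono[OF fopen[OF Wopen[of "Suc k"]]] pres[OF Wopen[of "Suc k"]] by simp
        moreover have "\<mu> W' > 0" using pos[OF copen[OF W'c]] xW' by blast
        ultimately show False using eqm[OF that] by linarith
      qed
      then show "x \<in> Wn k" using xW' by simp
    qed
  qed
  have "(f ^^ k) -` Wn k = U0" if "k \<le> p" for k
    using that
  proof (induction k)
    case 0 then show ?case using W0 by simp
  next
    case (Suc k)
    then have "(f ^^ Suc k) -` Wn (Suc k) = (f ^^ k) -` (f -` Wn (Suc k))"
      by (simp add: vimage_comp)
    also have "\<dots> = (f ^^ k) -` Wn k" using uniq Suc by simp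
    also have "\<dots> = U0" using Suc by simp
    finally show ?case .
  qed
  then show ?thesis using p by blast
qed

end
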